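(* Let $V$ be a vector configuration and $W\subseteq V$ a subconfiguration such that $\operatorname{lin}(W)\cap V=W$. Then the following three equalities are equivalent: (i) $\mathrm{DD}(V)=\mathrm{DD}(W)+\mathrm{DD}(V/W)$; (ii) $\deg^*(V)=\deg^*(W)+\deg^*(V/W)$; (iii) $\operatorname{codeg}^*(V)=\operatorname{codeg}^*(W)+\operatorname{codeg}^*(V/W)$.
   Context: A vector configuration is a finite family (repetitions allowed) $U$ of vectors in a real vector space $E$; a subconfiguration is a subfamily, $\operatorname{rank}(U)=\dim\operatorname{lin}(U)$, cardinalities count multiplicities. The quotient $V/W$ is the configuration in $E/\operatorname{lin}(W)$ of the images of the elements of $V\setminus W$. For a nonzero linear functional $f$ on $E$, the oriented linear hyperplane $H=\{f=0\}$ has $H^+=\{f>0\}$, $\overline{H}^-=\{f\le0\}$. Dual codegree: $\operatorname{codeg}^*(U)=\min_H|\overline{H}^-\cap U|$; dual degree: $\deg^*(U)=\max_H|H^+\cap U|-\operatorname{rank}(U)$, over oriented linear hyperplanes $H$. Covector discrepancy: $\mathrm{DD}(U)=\max_f\big|\,|\{u: f(u)>0\}|-|\{u:f(u)<0\}|\,\big|$ over all linear functionals $f$. *)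

theory Defs
  imports "HOL-Analysis.Analysis"
begin

text \<open>A vector configuration is a finite family of vectors, modelled as a finite
index set I together with a map v : I -> E (repetitions = distinct indices with
the same vector).  A subconfiguration is a subset J of I.  Linear functionals are
linear maps E -> real; an oriented linear hyperplane is given by a nonzero one.\<close>

definition covector_discrepancy :: "'i set \<Rightarrow> ('i \<Rightarrow> 'a::euclidean_space) \<Rightarrow> nat" where
  "covector_discrepancy I v =
     Sup {nat \<bar>int (card {i\<in>I. f (v i) > 0}) - int (card {i\<in>I. f (v i) < 0})\<bar>
          | f :: 'a \<Rightarrow> real. linear f}"

definition dual_codegree :: "'i set \<Rightarrow> ('i \<Rightarrow> 'a::euclidean_space) \<Rightarrow> nat" where
  "dual_codegree I v =
     Inf {card {i\<in>I. f (v i) \<le> 0} | f :: 'a \<Rightarrow> real. linear f \<and> (\<exists>x. f x \<noteq> 0)}"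

definition config_rank :: "'i set \<Rightarrow> ('i \<Rightarrow> 'a::euclidean_space) \<Rightarrow> nat" where
  "config_rank I v = dim (span (v ` I))"

definition dual_degree :: "'i set \<Rightarrow> ('i \<Rightarrow> 'a::euclidean_space) \<Rightarrow> int" where
  "dual_degree I v =
     int (Sup {card {i\<in>I. f (v i) > 0} | f :: 'a \<Rightarrow> real. linear f \<and> (\<exists>x. f x \<noteq> 0)})
     - int (config_rank I v)"

end

theory Submission
  imports Defs
begin

lemma small_t:
  fixes a c :: "'x \<Rightarrow> real"
  assumes "finite X" "\<forall>x\<in>X. c x \<noteq> 0"
  shows "\<exists>t>0. \<forall>x\<in>X. t * \<bar>a x\<bar> < \<bar>c x\<bar>"
  using assms
proof (induction X rule: finite_induct)
  case empty
  then show ?case by (rule_tac x=1 in exI) auto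
next
  case (insert y X)
  then obtain t where t: "t > 0" "\<forall>x\<in>X. t * \<bar>a x\<bar> < \<bar>c x\<bar>" by auto
  define t' where "t' = min t (\<bar>c y\<bar> / (\<bar>a y\<bar> + 1))"
  have cy: "\<bar>c y\<bar> > 0" using insert by auto
  have t'pos: "t' > 0" using t cy by (simp add: t'_def)
  have "t' * \<bar>a y\<bar> < \<bar>c y\<bar>"
  proof -
    have "t' * \<bar>a y\<bar> \<le> (\<bar>c y\<bar> / (\<bar>a y\<bar> + 1)) * \<bar>a y\<bar>"
      by (rule mult_right_mono) (auto simp: t'_def)
    also have "\<dots> < \<bar>c y\<bar>" using cy by (simp add: field_simps)
    finally show ?thesis .
  qed
  moreover have "\<forall>x\<in>X. t' * \<bar>a x\<bar> < \<bar>c x\<bar>"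
  proof
    fix x assume "x \<in> X"
    have "t' * \<bar>a x\<bar> \<le> t * \<bar>a x\<bar>" by (rule mult_right_mono) (auto simp: t'_def)
    then show "t' * \<bar>a x\<bar> < \<bar>c x\<bar>" using t \<open>x \<in> X\<close> by auto
  qed
  ultimately show ?case using t'pos by auto
qed

lemma generic_vec:
  fixes S :: "'a::euclidean_space set"
  assumes "finite S" "0 \<notin> S"
  shows "\<exists>w. w \<noteq> 0 \<and> (\<forall>u\<in>S. inner w u \<noteq> 0)"
  using assms
proof (induction S rule: finite_induct)
  case empty
  obtain b :: 'a where "b \<in> Basis" using nonempty_Basis by blast
  then have "b \<noteq> 0" by auto
  then show ?case by auto
next
  case (insert u S)
  then obtain w where w: "w \<noteq> 0" "\<forall>s\<in>S. inner w s \<noteq> 0" by auto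
  have u0: "u \<noteq> 0" using insert by auto
  show ?case
  proof (cases "inner w u = 0")
    case False
    then show ?thesis using w by auto
  next
    case True
    obtain t where t: "t > 0" "\<forall>s\<in>S. t * \<bar>inner u s\<bar> < \<bar>inner w s\<bar>"
      using small_t[of S "\<lambda>s. inner w s" "\<lambda>s. inner u s"] insert w by auto
    define w' where "w' = w + t *\<^sub>R u"
    have "inner w' u = t * inner u u" using True by (simp add: w'_def inner_add_left)
    then have 1: "inner w' u \<noteq> 0" using t u0 by simp
    have 2: "inner w' s \<noteq> 0" if "s \<in> S" for s
    proof -
      have "inner w' s = inner w s + t * inner u s" by (simp add: w'_def inner_add_left)
      moreover have "\<bar>t * inner u s\<bar> < \<bar>inner w s\<bar>" using t that by (simp add: abs_mult)
      ultimately show ?thesis by auto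
    qed
    have "w' \<noteq> 0" using 1 by auto
    then show ?thesis using 1 2 by auto
  qed
qed

lemma Inf_compr_mem: "P f \<Longrightarrow> \<exists>f. P f \<and> Inf {g f | f. P f} = (g f :: nat)"
proof -
  assume "P f"
  then have "{g f | f. P f} \<noteq> {}" by blast
  then have "Inf {g f | f. P f} \<in> {g f | f. P f}" by (rule Inf_nat_def1)
  then show ?thesis by blast
qed

lemma Inf_compr_lower: "P f \<Longrightarrow> Inf {g f | f. P f} \<le> (g f :: nat)"
  by (rule cInf_lower) auto

lemma Sup_compr_eq: "P f \<Longrightarrow> g f = z \<Longrightarrow> (\<And>f. P f \<Longrightarrow> g f \<le> z) \<Longrightarrow> Sup {g f | f. P f} = (z::nat)"
  by (rule cSup_eq_maximum) auto

lemma codeg_props: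
  fixes I :: "'i set" and v :: "'i \<Rightarrow> 'a::euclidean_space"
  shows "\<exists>f :: 'a \<Rightarrow> real. linear f \<and> (\<exists>x. f x \<noteq> 0) \<and> card {i\<in>I. f (v i) \<le> 0} = dual_codegree I v"
    and "\<And>g :: 'a \<Rightarrow> real. linear g \<Longrightarrow> g x \<noteq> 0 \<Longrightarrow> dual_codegree I v \<le> card {i\<in>I. g (v i) \<le> 0}"
proof -
  obtain b :: 'a where b: "b \<in> Basis" using nonempty_Basis by blast
  have "linear (inner b)" by (rule linearI) (auto simp: inner_add_right)
  moreover have "inner b b \<noteq> 0" using b by simp
  ultimately have P: "linear (inner b) \<and> (\<exists>x. inner b x \<noteq> 0)" by blast
  have "\<exists>f :: 'a \<Rightarrow> real. (linear f \<and> (\<exists>x. f x \<noteq> 0)) \<and> dual_codegree I v = card {i\<in>I. f (v i) \<le> 0}"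
    unfolding dual_codegree_def
    using Inf_compr_mem[of "\<lambda>f::'a\<Rightarrow>real. linear f \<and> (\<exists>x. f x \<noteq> 0)" "inner b"
          "\<lambda>f. card {i\<in>I. f (v i) \<le> 0}", OF P] .
  then show "\<exists>f :: 'a \<Rightarrow> real. linear f \<and> (\<exists>x. f x \<noteq> 0) \<and> card {i\<in>I. f (v i) \<le> 0} = dual_codegree I v"
    by (elim exE conjE) (intro exI conjI, assumption+, rule sym)
  fix g :: "'a \<Rightarrow> real" assume g: "linear g" "g x \<noteq> 0"
  then have Pg: "linear g \<and> (\<exists>x. g x \<noteq> 0)" by blast
  show "dual_codegree I v \<le> card {i\<in>I. g (v i) \<le> 0}"
    unfolding dual_codegree_def
    using Inf_compr_lower[of "\<lambda>f::'a\<Rightarrow>real. linear f \<and> (\<exists>x. f x \<noteq> 0)" g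
          "\<lambda>f. card {i\<in>I. f (v i) \<le> 0}", OF Pg] .
qed

lemma dd_upper_aux:
  fixes I :: "'i set" and v :: "'i \<Rightarrow> 'a::euclidean_space" and f :: "'a \<Rightarrow> real"
  assumes fin: "finite I" and lf: "linear f"
  shows "2 * dual_codegree I v \<le> 2 * card {i\<in>I. f (v i) < 0} + card {i\<in>I. f (v i) = 0}
           + card {i\<in>I. v i = 0}"
proof -
  define S where "S = {i\<in>I. f (v i) = 0 \<and> v i \<noteq> 0}"
  have finS: "finite S" using fin by (simp add: S_def)
  obtain w0 where w0: "w0 \<noteq> 0" "\<forall>u\<in>v ` S. inner w0 u \<noteq> 0"
  proof -
    have "0 \<notin> v ` S" by (auto simp: S_def)
    from generic_vec[OF finite_imageI[OF finS] this] show ?thesis using that by blast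
  qed
  have "\<exists>w. w \<noteq> 0 \<and> (\<forall>i\<in>S. inner w (v i) \<noteq> 0) \<and> 2 * card {i\<in>S. inner w (v i) < 0} \<le> card S"
  proof (cases "2 * card {i\<in>S. inner w0 (v i) < 0} \<le> card S")
    case True then show ?thesis using w0 by (intro exI[of _ w0] conjI) auto
  next
    case False
    have eq: "{i\<in>S. inner (-w0) (v i) < 0} = S - {i\<in>S. inner w0 (v i) < 0}"
      using w0 by (auto simp: inner_minus_left)
    have "card {i\<in>S. inner (-w0) (v i) < 0} = card S - card {i\<in>S. inner w0 (v i) < 0}"
      unfolding eq by (rule card_Diff_subset) (use finS in auto)
    moreover have "card {i\<in>S. inner w0 (v i) < 0} \<le> card S"
      by (rule card_mono[OF finS]) auto
    ultimately have h1: "2 * card {i\<in>S. inner (-w0) (v i) < 0} \<le> card S" using False by linarith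
    have h2: "-w0 \<noteq> 0" using w0 by simp
    have h3: "\<forall>i\<in>S. inner (-w0) (v i) \<noteq> 0" using w0 by (simp add: inner_minus_left)
    show ?thesis by (rule exI[of _ "-w0"], intro conjI, fact h2, fact h3, fact h1)
  qed
  then obtain w where w: "w \<noteq> 0" "\<forall>i\<in>S. inner w (v i) \<noteq> 0"
    "2 * card {i\<in>S. inner w (v i) < 0} \<le> card S" by (elim exE conjE) (rule that)
  define X where "X = v ` {i\<in>I. f (v i) \<noteq> 0} \<union> {x\<in>{w}. f x \<noteq> 0}"
  have finX: "finite X" using fin by (simp add: X_def)
  have nzX: "\<forall>x\<in>X. f x \<noteq> 0" by (auto simp: X_def)
  obtain t where t: "t > 0" "\<forall>x\<in>X. t * \<bar>inner w x\<bar> < \<bar>f x\<bar>"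
    using small_t[OF finX nzX, of "inner w"] by (elim exE conjE) (rule that)
  define g where "g = (\<lambda>x. f x + t * inner w x)"
  have lg: "linear g"
  proof (rule linearI)
    fix x y show "g (x + y) = g x + g y"
      by (simp add: g_def linear_add[OF lf] inner_add_right distrib_left)
  next
    fix r x show "g (r *\<^sub>R x) = r *\<^sub>R g x"
      by (simp add: g_def linear_scale[OF lf] distrib_left)
  qed
  have gw: "g w \<noteq> 0"
  proof (cases "f w = 0")
    case True then show ?thesis using t w by (simp add: g_def)
  next
    case False
    then have "w \<in> X" by (simp add: X_def)
    then have "t * \<bar>inner w w\<bar> < \<bar>f w\<bar>" using t(2) by blast
    moreover have "0 \<le> t * inner w w" using t(1) by simp
    ultimately show ?thesis by (auto simp: g_def)
  qed
  have sub: "{i\<in>I. g (v i) \<le> 0} \<subseteq> {i\<in>I. f (v i) < 0} \<union> {i\<in>S. inner w (v i) < 0} \<union> {i\<in>I. v i = 0}"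
  proof
    fix i assume i: "i \<in> {i\<in>I. g (v i) \<le> 0}"
    show "i \<in> {i\<in>I. f (v i) < 0} \<union> {i\<in>S. inner w (v i) < 0} \<union> {i\<in>I. v i = 0}"
    proof (cases "f (v i) = 0")
      case True
      show ?thesis
      proof (cases "v i = 0")
        case False
        then have "i \<in> S" using True i by (auto simp: S_def)
        then have "inner w (v i) \<noteq> 0" using w by auto
        moreover have "t * inner w (v i) \<le> 0" using i True by (simp add: g_def)
        ultimately have "inner w (v i) < 0" using t
          by (metis linorder_neqE_linordered_idom mult_pos_pos not_le)
        then show ?thesis using \<open>i \<in> S\<close> by auto
      qed (use i in auto)
    next
      case False
      then have "v i \<in> X" using i by (auto simp: X_def)
      then have "\<bar>t * inner w (v i)\<bar> < \<bar>f (v i)\<bar>" using t by (simp add: abs_mult)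
      then have "f (v i) < 0" using i False by (auto simp: g_def)
      then show ?thesis using i by auto
    qed
  qed
  have "dual_codegree I v \<le> card {i\<in>I. g (v i) \<le> 0}" by (rule codeg_props(2)[OF lg gw])
  also have "\<dots> \<le> card ({i\<in>I. f (v i) < 0} \<union> {i\<in>S. inner w (v i) < 0} \<union> {i\<in>I. v i = 0})"
    by (rule card_mono) (use fin sub in \<open>auto simp: S_def\<close>)
  also have "\<dots> \<le> card {i\<in>I. f (v i) < 0} + card {i\<in>S. inner w (v i) < 0} + card {i\<in>I. v i = 0}"
    using card_Un_le[of "{i\<in>I. f (v i) < 0} \<union> {i\<in>S. inner w (v i) < 0}" "{i\<in>I. v i = 0}"]
      card_Un_le[of "{i\<in>I. f (v i) < 0}" "{i\<in>S. inner w (v i) < 0}"] by linarith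
  finally have 1: "dual_codegree I v \<le> card {i\<in>I. f (v i) < 0} + card {i\<in>S. inner w (v i) < 0} + card {i\<in>I. v i = 0}" .
  have "{i\<in>I. f (v i) = 0} = S \<union> {i\<in>I. v i = 0}" 
    using linear_0[OF lf] by (auto simp: S_def)
  moreover have "S \<inter> {i\<in>I. v i = 0} = {}" by (auto simp: S_def)
  ultimately have "card {i\<in>I. f (v i) = 0} = card S + card {i\<in>I. v i = 0}"
    using fin by (simp add: card_Un_disjoint S_def)
  then show ?thesis using 1 w(3) by linarith
qed

lemma mem_compr: "x \<in> {g f | f. P f} \<Longrightarrow> \<exists>f. P f \<and> x = g f" by blast
lemma mem_comprI: "P f \<Longrightarrow> x = g f \<Longrightarrow> x \<in> {g f | f. P f}" by blast

lemma dd_formula: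
  fixes I :: "'i set" and v :: "'i \<Rightarrow> 'a::euclidean_space"
  assumes fin: "finite I"
  shows "int (covector_discrepancy I v) + 2 * int (dual_codegree I v)
           = int (card I) + int (card {i\<in>I. v i = 0})"
proof -
  define c where "c = dual_codegree I v"
  define z where "z = card {i\<in>I. v i = 0}"
  define P where "P = (\<lambda>f :: 'a \<Rightarrow> real. card {i\<in>I. f (v i) > 0})"
  define N where "N = (\<lambda>f :: 'a \<Rightarrow> real. card {i\<in>I. f (v i) < 0})"
  define Zf where "Zf = (\<lambda>f :: 'a \<Rightarrow> real. card {i\<in>I. f (v i) = 0})"
  have part: "P f + N f + Zf f = card I" for f
  proof -
    have "{i\<in>I. f (v i) > 0} \<union> {i\<in>I. f (v i) < 0} \<union> {i\<in>I. f (v i) = 0} = I" by auto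
    moreover have "card ({i\<in>I. f (v i) > 0} \<union> {i\<in>I. f (v i) < 0} \<union> {i\<in>I. f (v i) = 0})
       = P f + N f + Zf f"
      unfolding P_def N_def Zf_def using fin
      by (subst card_Un_disjoint; auto)+
    ultimately show ?thesis by simp
  qed
  have up: "int (P f) - int (N f) \<le> int (card I) + int z - 2 * int c" if lf: "linear f" for f
    using dd_upper_aux[OF fin lf, of v] part[of f]
    unfolding c_def z_def P_def N_def Zf_def by linarith
  have up2: "nat \<bar>int (P f) - int (N f)\<bar> \<le> nat (int (card I) + int z - 2 * int c)"
    if lf: "linear f" for f
  proof -
    have lf': "linear (\<lambda>x. - f x)"
    proof (rule linearI)
      fix x y show "- f (x + y) = - f x + - f y" by (simp add: linear_add[OF lf])
    next
      fix r x show "- f (r *\<^sub>R x) = r *\<^sub>R - f x" by (simp add: linear_scale[OF lf])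
    qed
    have "P (\<lambda>x. - f x) = N f" "N (\<lambda>x. - f x) = P f" unfolding P_def N_def by auto
    then show ?thesis using up[OF lf] up[OF lf'] by simp
  qed
  obtain f0 :: "'a \<Rightarrow> real" where f0all: "linear f0 \<and> (\<exists>x. f0 x \<noteq> 0) \<and>
    card {i\<in>I. f0 (v i) \<le> 0} = c"
    using codeg_props(1)[of I v, folded c_def] by (rule exE)
  note f0 = f0all[THEN conjunct1] f0all[THEN conjunct2, THEN conjunct1] f0all[THEN conjunct2, THEN conjunct2]
  have lo: "int (card I) + int z - 2 * int c \<le> int (P f0) - int (N f0)"
  proof -
    have "{i\<in>I. f0 (v i) \<le> 0} = {i\<in>I. f0 (v i) < 0} \<union> {i\<in>I. f0 (v i) = 0}" by auto
    moreover have "card ({i\<in>I. f0 (v i) < 0} \<union> {i\<in>I. f0 (v i) = 0}) = N f0 + Zf f0"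
      unfolding N_def Zf_def using fin by (subst card_Un_disjoint) auto
    ultimately have "c = N f0 + Zf f0" using f0(3) by simp
    moreover have "{i\<in>I. v i = 0} \<subseteq> {i\<in>I. f0 (v i) = 0}" using linear_0[OF f0(1)] by auto
    then have "z \<le> Zf f0" unfolding z_def Zf_def by (rule card_mono[rotated]) (use fin in auto)
    ultimately show ?thesis using part[of f0] by linarith
  qed
  have eq0: "nat \<bar>int (P f0) - int (N f0)\<bar> = nat (int (card I) + int z - 2 * int c)"
    using up2[OF f0(1)] lo by linarith
  have "covector_discrepancy I v = nat (int (card I) + int z - 2 * int c)"
    unfolding covector_discrepancy_def
  proof (rule Sup_compr_eq[of "linear :: ('a \<Rightarrow> real) \<Rightarrow> bool" f0
        "\<lambda>f. nat \<bar>int (card {i\<in>I. f (v i) > 0}) - int (card {i\<in>I. f (v i) < 0})\<bar>"])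
    show "linear f0" by (rule f0(1))
    show "nat \<bar>int (card {i\<in>I. f0 (v i) > 0}) - int (card {i\<in>I. f0 (v i) < 0})\<bar> = nat (int (card I) + int z - 2 * int c)"
      using eq0 unfolding P_def N_def .
    fix f :: "'a \<Rightarrow> real" assume "linear f"
    show "nat \<bar>int (card {i\<in>I. f (v i) > 0}) - int (card {i\<in>I. f (v i) < 0})\<bar> \<le> nat (int (card I) + int z - 2 * int c)"
      using up2[OF \<open>linear f\<close>] unfolding P_def N_def .
  qed
  moreover have "0 \<le> int (card I) + int z - 2 * int c"
  proof -
    have "linear (\<lambda>x::'a. 0::real)" by (rule linear_zero)
    from dd_upper_aux[OF fin this, of v] have "2 * c \<le> card I + z"
      unfolding c_def z_def by simp
    then show ?thesis by linarith
  qed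
  ultimately show ?thesis unfolding c_def z_def by linarith
qed

lemma deg_formula:
  fixes I :: "'i set" and v :: "'i \<Rightarrow> 'a::euclidean_space"
  assumes fin: "finite I"
  shows "dual_degree I v = int (card I) - int (dual_codegree I v) - int (config_rank I v)"
proof -
  have pc: "card {i\<in>I. f (v i) > 0} = card I - card {i\<in>I. f (v i) \<le> 0}" for f :: "'a \<Rightarrow> real"
  proof -
    have "{i\<in>I. f (v i) > 0} = I - {i\<in>I. f (v i) \<le> 0}" by auto
    then show ?thesis using fin by (simp add: card_Diff_subset)
  qed
  obtain f0 :: "'a \<Rightarrow> real" where f0all: "linear f0 \<and> (\<exists>x. f0 x \<noteq> 0) \<and>
    card {i\<in>I. f0 (v i) \<le> 0} = dual_codegree I v"
    using codeg_props(1)[of I v] by (rule exE)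
  note f0 = f0all[THEN conjunct1] f0all[THEN conjunct2, THEN conjunct1] f0all[THEN conjunct2, THEN conjunct2]
  have "Sup {card {i\<in>I. f (v i) > 0} | f :: 'a \<Rightarrow> real. linear f \<and> (\<exists>x. f x \<noteq> 0)}
        = card I - dual_codegree I v"
  proof (rule Sup_compr_eq[of "\<lambda>f::'a\<Rightarrow>real. linear f \<and> (\<exists>x. f x \<noteq> 0)" f0
        "\<lambda>f. card {i\<in>I. f (v i) > 0}"])
    show "linear f0 \<and> (\<exists>x. f0 x \<noteq> 0)" using f0(1,2) by (rule conjI)
    show "card {i\<in>I. f0 (v i) > 0} = card I - dual_codegree I v" using pc[of f0] f0(3) by simp
    fix f :: "'a \<Rightarrow> real" assume Pf: "linear f \<and> (\<exists>x. f x \<noteq> 0)"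
    then obtain y where f: "linear f" "f y \<noteq> 0" by (elim conjE exE)
    have "dual_codegree I v \<le> card {i\<in>I. f (v i) \<le> 0}" by (rule codeg_props(2)[OF f(1,2)])
    then show "card {i\<in>I. f (v i) > 0} \<le> card I - dual_codegree I v" using pc[of f] by linarith
  qed
  moreover have "dual_codegree I v \<le> card I"
  proof -
    have "card {i\<in>I. f0 (v i) \<le> 0} \<le> card I" by (rule card_mono[OF fin]) auto
    then show ?thesis using f0(3) by simp
  qed
  ultimately show ?thesis unfolding dual_degree_def by simp
qed

lemma rank_split:
  fixes I J :: "'i set" and v :: "'i \<Rightarrow> 'a::euclidean_space"
    and q :: "'a \<Rightarrow> 'b::euclidean_space"
  assumes "J \<subseteq> I" and lq: "linear q" and ker: "\<forall>x. q x = 0 \<longleftrightarrow> x \<in> span (v ` J)"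
  shows "config_rank I v = config_rank J v + config_rank (I - J) (q \<circ> v)"
proof -
  define A where "A = span (v ` J)"
  define B where "B = span (v ` I)"
  define C where "C = {y\<in>B. \<forall>x\<in>A. orthogonal x y}"
  have AB: "A \<subseteq> B" unfolding A_def B_def using assms(1) by (intro span_mono) auto
  have d1: "dim C + dim A = dim B" unfolding C_def
    by (rule dim_subspace_orthogonal_to_vectors) (use AB in \<open>auto simp: A_def B_def\<close>)
  have subC: "subspace C"
  proof -
    have "C = B \<inter> {y. \<forall>x\<in>A. orthogonal x y}" unfolding C_def by auto
    then show ?thesis using subspace_orthogonal_to_vectors[of A]
      by (simp add: B_def subspace_inter subspace_span)
  qed
  have inj: "inj_on q (span C)"
  proof -
    have "span C = C" using subC by simp
    moreover have "inj_on q C"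
    proof (rule inj_onI)
      fix x y assume xy: "x \<in> C" "y \<in> C" "q x = q y"
      then have "q (x - y) = 0" using lq by (simp add: linear_diff)
      then have "x - y \<in> A" using ker by (simp add: A_def)
      moreover have "x - y \<in> C" using xy subC by (simp add: subspace_diff)
      ultimately have "orthogonal (x - y) (x - y)" unfolding C_def by auto
      then show "x = y" by (simp add: orthogonal_def)
    qed
    ultimately show ?thesis by (metis span_eq_iff)
  qed
  have d2: "dim (q ` C) = dim C" by (rule eucl.dim_image_eq[OF lq inj])
  have qCB: "q ` C = q ` B"
  proof
    show "q ` C \<subseteq> q ` B" unfolding C_def by auto
  next
    show "q ` B \<subseteq> q ` C"
    proof
      fix b assume "b \<in> q ` B"
      then obtain x where x: "x \<in> B" "b = q x" by auto
      obtain y z where yz: "y \<in> span (v ` J)" "\<And>w. w \<in> span (v ` J) \<Longrightarrow> orthogonal z w" "x = y + z"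
        using orthogonal_subspace_decomp_exists[of "v ` J" x] by metis
      have yB: "y \<in> B" using yz(1) AB by (auto simp: A_def)
      have "z = x - y" using yz(3) by simp
      then have "z \<in> B" using x(1) yB by (simp add: B_def span_diff)
      moreover have "\<forall>w\<in>A. orthogonal w z" using yz(2) by (auto simp: A_def orthogonal_commute)
      ultimately have "z \<in> C" by (simp add: C_def)
      moreover have "q y = 0" using yz(1) ker by simp
      then have "q x = q z" using yz(3) lq by (simp add: linear_add)
      ultimately show "b \<in> q ` C" using x by auto
    qed
  qed
  have "q ` B = span (q ` v ` I)" unfolding B_def by (rule span_linear_image[OF lq, symmetric])
  also have "span (q ` v ` I) = span ((q \<circ> v) ` (I - J))"
  proof (rule subset_antisym)
    show "span ((q \<circ> v) ` (I - J)) \<subseteq> span (q ` v ` I)" by (rule span_mono) auto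
  next
    have "q ` v ` I \<subseteq> span ((q \<circ> v) ` (I - J))"
    proof
      fix b assume "b \<in> q ` v ` I"
      then obtain i where i: "i \<in> I" "b = q (v i)" by auto
      show "b \<in> span ((q \<circ> v) ` (I - J))"
      proof (cases "i \<in> J")
        case True
        then have "b = 0" using i ker by (simp add: span_base)
        then show ?thesis by (simp add: span_zero)
      next
        case False then show ?thesis using i by (intro span_base) auto
      qed
    qed
    then show "span (q ` v ` I) \<subseteq> span ((q \<circ> v) ` (I - J))"
      by (rule span_minimal) (rule subspace_span)
  qed
  finally have "dim (q ` C) = config_rank (I - J) (q \<circ> v)"
    unfolding config_rank_def using qCB by simp
  then show ?thesis using d1 d2 unfolding config_rank_def A_def B_def by simp
qed

theorem mainTheorem12:
  fixes I J :: "'i set" and v :: "'i \<Rightarrow> 'a::euclidean_space"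
    and q :: "'a \<Rightarrow> 'b::euclidean_space"
  assumes "finite I" and "J \<subseteq> I"
    and "\<forall>i\<in>I. v i \<in> span (v ` J) \<longrightarrow> i \<in> J"
    and "linear q" and "\<forall>x. q x = 0 \<longleftrightarrow> x \<in> span (v ` J)"
  shows "(covector_discrepancy I v = covector_discrepancy J v + covector_discrepancy (I - J) (q \<circ> v)
          \<longleftrightarrow> dual_degree I v = dual_degree J v + dual_degree (I - J) (q \<circ> v))
       \<and> (dual_degree I v = dual_degree J v + dual_degree (I - J) (q \<circ> v)
          \<longleftrightarrow> dual_codegree I v = dual_codegree J v + dual_codegree (I - J) (q \<circ> v))"
proof -
  have finJ: "finite J" using assms(1,2) finite_subset by blast
  have finQ: "finite (I - J)" using assms(1) by simp
  have z1: "{i\<in>I. v i = 0} = {i\<in>J. v i = 0}" using assms(2,3) span_zero by force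
  have z2: "{i\<in>I - J. (q \<circ> v) i = 0} = {}" using assms(3,5) by auto
  have cI: "card I = card J + card (I - J)"
    using assms(1,2) by (metis card_Diff_subset finJ card_mono le_add_diff_inverse)
  have r: "config_rank I v = config_rank J v + config_rank (I - J) (q \<circ> v)"
    by (rule rank_split[OF assms(2,4,5)])
  note a1 = dd_formula[OF assms(1), of v] and a2 = dd_formula[OF finJ, of v]
    and a3 = dd_formula[OF finQ, of "q \<circ> v"]
  note b1 = deg_formula[OF assms(1), of v] and b2 = deg_formula[OF finJ, of v]
    and b3 = deg_formula[OF finQ, of "q \<circ> v"]
  have a3': "int (covector_discrepancy (I - J) (q \<circ> v)) + 2 * int (dual_codegree (I - J) (q \<circ> v))
           = int (card (I - J))" using a3 unfolding z2 by simp
  have e1: "int (covector_discrepancy I v) = int (covector_discrepancy J v) + int (covector_discrepancy (I - J) (q \<circ> v))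
     \<longleftrightarrow> int (dual_codegree I v) = int (dual_codegree J v) + int (dual_codegree (I - J) (q \<circ> v))"
    using a1 a2 a3' cI unfolding z1 by (intro iffI) linarith+
  have e2: "dual_degree I v = dual_degree J v + dual_degree (I - J) (q \<circ> v)
     \<longleftrightarrow> int (dual_codegree I v) = int (dual_codegree J v) + int (dual_codegree (I - J) (q \<circ> v))"
    using b1 b2 b3 cI r by (intro iffI) linarith+
  have e3: "covector_discrepancy I v = covector_discrepancy J v + covector_discrepancy (I - J) (q \<circ> v)
     \<longleftrightarrow> int (covector_discrepancy I v) = int (covector_discrepancy J v) + int (covector_discrepancy (I - J) (q \<circ> v))"
    by linarith
  have e4: "dual_codegree I v = dual_codegree J v + dual_codegree (I - J) (q \<circ> v)
     \<longleftrightarrow> int (dual_codegree I v) = int (dual_codegree J v) + int (dual_codegree (I - J) (q \<circ> v))"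
    by linarith
  show ?thesis using e1 e2 e3 e4 by blast
qed

end
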